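(* Let $A$ be a differential $K$-algebra without exponents nor logarithm and let $M$ be a regular singular differential module over $A$ of rank $n$. If $G$ and $G'$ are matrices of the connection of $M$ in two $A$-bases of $M$, both with all entries in $K$, then the multisets of eigenvalues (with multiplicity) of $G$ and $G'$ have the same image in $K/\mathbb{Z}$. Consequently this image multiset (the multiset of exponents $\mathrm{Exp}(M)\subset K/\mathbb{Z}$) is an isomorphism invariant of $M$.
   Context: $K$ is an algebraically closed field of characteristic $0$. $K[t^K]$ is the group algebra over $K$ of $(K,+)$, with $K$-basis $t^a$ ($a\in K$), $t^at^b=t^{a+b}$; $K[t,t^{-1}]$ is identified with the span of $t^n$, $n\in\mathbb{Z}$. Fix a set $\widetilde{K/\mathbb{Z}}\subset K$ of representatives of $K/\mathbb{Z}$ with $0\in\widetilde{K/\mathbb{Z}}$. $A$ is a commutative ring with unit containing $K[t,t^{-1}]$ as a subring, with a derivation $\partial$ extending $t\frac{d}{dt}$. $A[t^K]:=A\otimes_{K[t,t^{-1}]}K[t^K]$, $E_A:=A[t^K][\ell]$ ($\ell$ an indeterminate), with derivation $\partial$ extending that of $A$, $\partial(t^a)=at^a$, $\partial(\ell)=1$. $A$ is a differential $K$-algebra without exponents nor logarithm if $\{f\in A:\partial^2 f=0\}=K$ and, for every $a\in\widetilde{K/\mathbb{Z}}\setminus\{0\}$, $\partial f+af=0$ ($f\in A$) implies $f=0$. A differential module over a differential ring $(B,\partial)$ is a $B$-module $M$ with additive $\nabla$ satisfying $\nabla(fm)=\partial(f)m+f\nabla(m)$; it is trivial if isomorphic to a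 direct sum of copies of $(B,\partial)$. If $M$ is free with basis $b_1,\dots,b_n$ and $\nabla(b_i)=\sum_j g_{j,i}b_j$, the matrix of the connection in this basis is $G=(g_{i,j})$. $M$ is regular singular if $M$ is finite free over $A$ and $M\otimes_AE_A$ (connection $\nabla\otimes1+1\otimes\partial$) is trivial as a differential module over $E_A$. *)

theory Defs
  imports "Jordan_Normal_Form.Char_Poly" "HOL-Computational_Algebra.Polynomial"
begin

text \<open>K is a type 'k of class field_char_0 (algebraic closedness is an
explicit hypothesis of the theorem). A is a type 'a of class comm_ring_1, with a ring
embedding emb of K, an element t with inverse ti, so that K[t,t^-1] (spanned by
emb c * t^z, z integer) is a subring of A.\<close>

definition tpow :: "'a::comm_ring_1 \<Rightarrow> 'a \<Rightarrow> int \<Rightarrow> 'a" where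
  "tpow t ti z = (if z \<ge> 0 then t ^ nat z else ti ^ nat (- z))"

definition reps :: "'k::field_char_0 set \<Rightarrow> bool" where
  "reps R \<longleftrightarrow> 0 \<in> R \<and> (\<forall>x. \<exists>!r. r \<in> R \<and> x - r \<in> \<int>)"

text \<open>A commutative ring containing K[t,t^-1] as a subring, with a derivation d
extending t d/dt.\<close>
definition diff_K_algebra ::
  "('k::field_char_0 \<Rightarrow> 'a::comm_ring_1) \<Rightarrow> 'a \<Rightarrow> 'a \<Rightarrow> ('a \<Rightarrow> 'a) \<Rightarrow> bool" where
  "diff_K_algebra emb t ti d \<longleftrightarrow>
     (\<forall>x y. emb (x + y) = emb x + emb y) \<and> (\<forall>x y. emb (x * y) = emb x * emb y) \<and>
     emb 1 = 1 \<and> t * ti = 1 \<and>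
     (\<forall>F (c :: int \<Rightarrow> 'k). finite F \<longrightarrow> (\<Sum>z\<in>F. emb (c z) * tpow t ti z) = 0 \<longrightarrow>
        (\<forall>z\<in>F. c z = 0)) \<and>
     (\<forall>x y. d (x + y) = d x + d y) \<and> (\<forall>x y. d (x * y) = d x * y + x * d y) \<and>
     (\<forall>c z. d (emb c * tpow t ti z) = of_int z * (emb c * tpow t ti z))"

definition no_exp_log ::
  "('k::field_char_0 \<Rightarrow> 'a::comm_ring_1) \<Rightarrow> ('a \<Rightarrow> 'a) \<Rightarrow> 'k set \<Rightarrow> bool" where
  "no_exp_log emb d R \<longleftrightarrow>
     {f. d (d f) = 0} = range emb \<and>
     (\<forall>a \<in> R - {0}. \<forall>f. d f + emb a * f = 0 \<longrightarrow> f = 0)"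

text \<open>E_A = A[t^K][l]. Since K[t^K] is free over K[t,t^-1] with basis t^a (a in R),
an element of E_A is a finitely supported family of coefficients e a k in A
(a in R, k in nat), standing for the sum of e a k * t^a * l^k.\<close>
definition EA :: "'k::field_char_0 set \<Rightarrow> ('k \<Rightarrow> nat \<Rightarrow> 'a::comm_ring_1) set" where
  "EA R = {e. finite {(a, k). e a k \<noteq> 0} \<and> (\<forall>a k. e a k \<noteq> 0 \<longrightarrow> a \<in> R)}"

definition int_of :: "'k::field_char_0 \<Rightarrow> int" where
  "int_of x = (THE z. x = of_int z)"

text \<open>Product in E_A: t^a t^b = t^(a+b-c) t^c with c in R, a+b-c an integer.\<close>
definition emul :: "'k::field_char_0 set \<Rightarrow> 'a::comm_ring_1 \<Rightarrow> 'a \<Rightarrow>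
    ('k \<Rightarrow> nat \<Rightarrow> 'a) \<Rightarrow> ('k \<Rightarrow> nat \<Rightarrow> 'a) \<Rightarrow> ('k \<Rightarrow> nat \<Rightarrow> 'a)" where
  "emul R t ti e1 e2 = (\<lambda>c m. if c \<in> R then
      (\<Sum>p \<in> {((a, i), (b, j)). e1 a i \<noteq> 0 \<and> e2 b j \<noteq> 0 \<and> i + j = m \<and> a + b - c \<in> \<int>}.
         (case p of ((a, i), (b, j)) \<Rightarrow> e1 a i * e2 b j * tpow t ti (int_of (a + b - c))))
      else 0)"

text \<open>Derivation on E_A: d(f t^a l^k) = (d f + a f) t^a l^k + k f t^a l^(k-1).\<close>
definition ederiv :: "('k \<Rightarrow> 'a::comm_ring_1) \<Rightarrow> ('a \<Rightarrow> 'a) \<Rightarrow>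
    ('k \<Rightarrow> nat \<Rightarrow> 'a) \<Rightarrow> ('k \<Rightarrow> nat \<Rightarrow> 'a)" where
  "ederiv emb d e = (\<lambda>a k. d (e a k) + emb a * e a k + of_nat (k + 1) * e a (k + 1))"

definition emat_mult :: "'k::field_char_0 set \<Rightarrow> 'a::comm_ring_1 \<Rightarrow> 'a \<Rightarrow> nat \<Rightarrow>
    (nat \<Rightarrow> nat \<Rightarrow> 'k \<Rightarrow> nat \<Rightarrow> 'a) \<Rightarrow> (nat \<Rightarrow> nat \<Rightarrow> 'k \<Rightarrow> nat \<Rightarrow> 'a) \<Rightarrow>
    (nat \<Rightarrow> nat \<Rightarrow> 'k \<Rightarrow> nat \<Rightarrow> 'a)" where
  "emat_mult R t ti n Y Z = (\<lambda>i j c m. \<Sum>l<n. emul R t ti (Y i l) (Z l j) c m)"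

definition eone_mat :: "nat \<Rightarrow> nat \<Rightarrow> 'k::zero \<Rightarrow> nat \<Rightarrow> 'a::comm_ring_1" where
  "eone_mat i j a k = (if i = j \<and> a = 0 \<and> k = 0 then 1 else 0)"

definition diff_module :: "('a::comm_ring_1 \<Rightarrow> 'a) \<Rightarrow> ('a \<Rightarrow> 'm::ab_group_add \<Rightarrow> 'm) \<Rightarrow>
    ('m \<Rightarrow> 'm) \<Rightarrow> bool" where
  "diff_module d scale nabla \<longleftrightarrow> Modules.module scale \<and>
     (\<forall>x y. nabla (x + y) = nabla x + nabla y) \<and>
     (\<forall>f x. nabla (scale f x) = scale (d f) x + scale f (nabla x))"

definition is_basis :: "('a::comm_ring_1 \<Rightarrow> 'm::ab_group_add \<Rightarrow> 'm) \<Rightarrow> nat \<Rightarrow> (nat \<Rightarrow> 'm) \<Rightarrow> bool" where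
  "is_basis scale n b \<longleftrightarrow>
     (\<forall>x. \<exists>!f. (\<forall>i. n \<le> i \<longrightarrow> f i = 0) \<and> x = (\<Sum>i<n. scale (f i) (b i)))"

definition is_conn_matrix :: "('m \<Rightarrow> 'm) \<Rightarrow> ('a::comm_ring_1 \<Rightarrow> 'm::ab_group_add \<Rightarrow> 'm) \<Rightarrow>
    nat \<Rightarrow> (nat \<Rightarrow> 'm) \<Rightarrow> (nat \<Rightarrow> nat \<Rightarrow> 'a) \<Rightarrow> bool" where
  "is_conn_matrix nabla scale n b g \<longleftrightarrow>
     (\<forall>i<n. nabla (b i) = (\<Sum>j<n. scale (g j i) (b j)))"

text \<open>M tensor E_A, which is free over E_A with basis b_i (x) 1 and connection matrix g,
is trivial: it has an E_A-basis of horizontal elements, i.e. an invertible n x n matrix Y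
over E_A with d Y + g Y = 0.\<close>
definition EA_trivial :: "('k::field_char_0 \<Rightarrow> 'a::comm_ring_1) \<Rightarrow> 'a \<Rightarrow> 'a \<Rightarrow> ('a \<Rightarrow> 'a) \<Rightarrow>
    'k set \<Rightarrow> nat \<Rightarrow> (nat \<Rightarrow> nat \<Rightarrow> 'a) \<Rightarrow> bool" where
  "EA_trivial emb t ti d R n g \<longleftrightarrow>
     (\<exists>Y Z. (\<forall>i<n. \<forall>j<n. Y i j \<in> EA R \<and> Z i j \<in> EA R) \<and>
        (\<forall>i<n. \<forall>j<n. emat_mult R t ti n Y Z i j = eone_mat i j \<and>
                      emat_mult R t ti n Z Y i j = eone_mat i j) \<and>
        (\<forall>i<n. \<forall>j<n. \<forall>c m. ederiv emb d (Y i j) c m + (\<Sum>l<n. g i l * Y l j c m) = 0))"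

definition regular_singular :: "('k::field_char_0 \<Rightarrow> 'a::comm_ring_1) \<Rightarrow> 'a \<Rightarrow> 'a \<Rightarrow> ('a \<Rightarrow> 'a) \<Rightarrow>
    'k set \<Rightarrow> ('a \<Rightarrow> 'm::ab_group_add \<Rightarrow> 'm) \<Rightarrow> ('m \<Rightarrow> 'm) \<Rightarrow> nat \<Rightarrow> bool" where
  "regular_singular emb t ti d R scale nabla n \<longleftrightarrow>
     (\<exists>b g. is_basis scale n b \<and> is_conn_matrix nabla scale n b g \<and> EA_trivial emb t ti d R n g)"

definition exps_mod_Z :: "'k::field_char_0 mat \<Rightarrow> 'k set multiset" where
  "exps_mod_Z G = image_mset (\<lambda>x. {y. x - y \<in> \<int>}) (proots (char_poly G))"

end

theory Submission
  imports Defs "Jordan_Normal_Form.Schur_Decomposition" "Jordan_Normal_Form.DL_Rank"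
begin

lemma exists_inv_first_col:
  fixes v :: "'a::field vec"
  assumes v: "v \<in> carrier_vec n" and v0: "v \<noteq> 0\<^sub>v n"
  shows "\<exists>W W'. W \<in> carrier_mat n n \<and> W' \<in> carrier_mat n n \<and> W * W' = 1\<^sub>m n \<and> W' * W = 1\<^sub>m n
     \<and> col W 0 = v"
proof -
  interpret vec_space "TYPE('a)" n .
  define b where "b = basis_completion v"
  from basis_completion[OF v v0, folded b_def]
  have dist_b: "distinct b" and indep: "\<not> lin_dep (set b)" and bc: "set b \<subseteq> carrier_vec n"
    and hdb: "hd b = v" and len_b: "length b = n" by auto
  define W where "W = mat_of_cols n b"
  have W: "W \<in> carrier_mat n n" unfolding W_def using len_b by auto
  have colsW: "cols W = b" unfolding W_def using bc by (simp add: cols_mat_of_cols)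
  have "det W \<noteq> 0"
  proof
    assume "det W = 0"
    then obtain x where x: "x \<in> carrier_vec n" "x \<noteq> 0\<^sub>v n" "W *\<^sub>v x = 0\<^sub>v n"
      using det_0_iff_vec_prod_zero_field[OF W] by auto
    from lin_depI[OF W x] dist_b colsW indep show False by auto
  qed
  from det_non_zero_imp_unit[OF W this, of "()"]
  obtain W' where W'W: "W' * W = 1\<^sub>m n" and W': "W' \<in> carrier_mat n n"
    unfolding Units_def ring_mat_def by auto
  have WW': "W * W' = 1\<^sub>m n" using mat_mult_left_right_inverse[OF W' W W'W] .
  have n0: "n \<noteq> 0" using v v0 by auto
  then obtain c cs where bcs: "b = c # cs" using len_b by (cases b, auto)
  have "col W 0 = v" unfolding W_def using hdb bcs n0 len_b v
    by (subst col_mat_of_cols, auto)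
  thus ?thesis using W W' W'W WW' by blast
qed

lemma triangularize:
  assumes A: "(A::'a::field mat) \<in> carrier_mat n n"
      and c: "char_poly A = (\<Prod> (e :: 'a) \<leftarrow> es. [:- e, 1:])"
  shows "\<exists>B P Q. similar_mat_wit A B P Q \<and> upper_triangular B \<and> diag_mat B = es"
  using assms
proof (induct es arbitrary: n A)
  case Nil
  with degree_monic_char_poly[of A n]
  have "n = 0" using Nil by auto
  with Nil have "similar_mat_wit A A (1\<^sub>m n) (1\<^sub>m n)" "upper_triangular A" "diag_mat A = []"
    by (auto intro: similar_mat_wit_refl simp: diag_mat_def)
  thus ?case by blast
next
  case (Cons e es n A)
  let ?n1 = "n - 1"
  from Cons have A: "A \<in> carrier_mat n n" and dim: "dim_row A = n" by auto
  let ?cp = "char_poly A"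
  from Cons(3)
  have cp: "?cp = [: -e, 1 :] * (\<Prod>e \<leftarrow> es. [:- e, 1:])" by auto
  have mon: "monic (\<Prod>e\<leftarrow> es. [:- e, 1:])" by (rule monic_prod_list, auto)
  have deg: "degree ?cp = Suc (degree (\<Prod>e\<leftarrow> es. [:- e, 1:]))" unfolding cp
    by (subst degree_mult_eq, insert mon, auto)
  with degree_monic_char_poly[OF A] have n: "n \<noteq> 0" by auto
  have e: "eigenvalue A e" 
    unfolding eigenvalue_root_char_poly[OF A] cp by simp
  then obtain v where ev: "eigenvector A v e" unfolding eigenvalue_def by auto
  from this[unfolded eigenvector_def]
  have v[simp]: "v \<in> carrier_vec n" and v0: "v \<noteq> 0\<^sub>v n" and eigen: "A *\<^sub>v v = e \<cdot>\<^sub>v v" using A by auto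
  from exists_inv_first_col[OF v v0] obtain W W' where W: "W \<in> carrier_mat n n"
    and W': "W' \<in> carrier_mat n n" and WW': "W * W' = 1\<^sub>m n" and W'W: "W' * W = 1\<^sub>m n"
    and colW: "col W 0 = v" by blast
  define A' where "A' = W' * A * W"
  obtain A1 A2 A0 A3 where splitA': "split_block A' 1 1 = (A1,A2,A0,A3)"
    by (cases "split_block A' 1 1", auto)
  have A': "A' \<in> carrier_mat n n" using W W' A unfolding A'_def by auto
  have A'A_wit: "similar_mat_wit A' A W' W"
    by (rule similar_mat_witI[of _ _ n], insert W W' A A' W'W WW', auto simp: A'_def)
  hence A'A: "similar_mat A' A" unfolding similar_mat_def by blast
  from similar_mat_wit_sym[OF A'A_wit] have simAA': "similar_mat_wit A A' W W'" by auto
  let ?f = "(\<lambda> i. if i = 0 then e else 0)"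
  have col0: "col A' 0 = vec n ?f"
  proof -
    have "col A' 0 = (W' * A) *\<^sub>v col W 0" unfolding A'_def
      using W W' A n by (subst col_mult2, auto)
    also have "\<dots> = W' *\<^sub>v (A *\<^sub>v v)" unfolding colW using W' A
      by (subst assoc_mult_mat_vec, auto)
    also have "\<dots> = e \<cdot>\<^sub>v (W' *\<^sub>v v)" unfolding eigen using W' by (auto simp: mult_mat_vec)
    also have "W' *\<^sub>v v = col (W' * W) 0" unfolding colW[symmetric] using W W' n
      by (subst col_mult2, auto)
    also have "\<dots> = unit_vec n 0" unfolding W'W using n by auto
    finally show ?thesis by (auto simp: unit_vec_def)
  qed
  from A' n have "dim_row A' = 1 + ?n1" "dim_col A' = 1 + ?n1" by auto
  from split_block[OF splitA' this] have A2: "A2 \<in> carrier_mat 1 ?n1"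
    and A3: "A3 \<in> carrier_mat ?n1 ?n1" 
    and A'block: "A' = four_block_mat A1 A2 A0 A3" by auto
  have A1id: "A1 = mat 1 1 (\<lambda> _. e)"
    using splitA'[unfolded split_block_def Let_def] arg_cong[OF col0, of "\<lambda> v. v $ 0"] A' n
    by (auto simp: col_def)
  have A1: "A1 \<in> carrier_mat 1 1" unfolding A1id by auto
  {
    fix i
    assume "i < ?n1"
    with arg_cong[OF col0, of "\<lambda> v. v $ Suc i"] A'
    have "A' $$ (Suc i, 0) = 0" by auto
  } note A'0 = this
  have A0id: "A0 = 0\<^sub>m ?n1 1"
    using splitA'[unfolded split_block_def Let_def] A'0 A' by auto
  have A0: "A0 \<in> carrier_mat ?n1 1" unfolding A0id by auto
  from cp char_poly_similar[OF A'A]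
  have cp: "char_poly A' = [: -e,1 :] * (\<Prod> e \<leftarrow> es. [:- e, 1:])" by simp
  also have "char_poly A' = char_poly A1 * char_poly A3" 
    unfolding A'block A0id
    by (rule char_poly_four_block_zeros_col[OF A1 A2 A3])
  also have "char_poly A1 = [: -e,1 :]"
    by (simp add: A1id char_poly_defs det_def sign_def)
  finally have cp: "char_poly A3 = (\<Prod> e \<leftarrow> es. [:- e, 1:])"
    by (metis mult_cancel_left pCons_eq_0_iff zero_neq_one)
  from Cons(1)[OF A3 cp] obtain B P' Q' where
    simIH: "similar_mat_wit A3 B P' Q'" and ut: "upper_triangular B" and diag: "diag_mat B = es" by auto
  from similar_mat_witD2[OF A3 simIH] 
  have B: "B \<in> carrier_mat ?n1 ?n1" and P': "P' \<in> carrier_mat ?n1 ?n1" and Q': "Q' \<in> carrier_mat ?n1 ?n1" 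
    and PQ': "P' * Q' = 1\<^sub>m ?n1" by auto
  let ?P' = "four_block_mat (1\<^sub>m 1) (0\<^sub>m 1 ?n1) (0\<^sub>m ?n1 1) P'"
  let ?Q' = "four_block_mat (1\<^sub>m 1) (0\<^sub>m 1 ?n1) (0\<^sub>m ?n1 1) Q'"
  define C where "C = four_block_mat A1 (A2 * P') A0 B"
  have A0_eq: "A0 = P' * A0 * 1\<^sub>m 1" unfolding A0id using P' by auto
  have simA'C: "similar_mat_wit A' C ?P' ?Q'" unfolding A'block C_def
    by (rule similar_mat_wit_four_block[OF similar_mat_wit_refl[OF A1] simIH _ A0_eq A1 A3 A0],
    insert PQ' A2 P' Q', auto)
  have ut1: "upper_triangular A1" unfolding A1id by auto
  have ut: "upper_triangular C" unfolding C_def A0id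
    by (intro upper_triangular_four_block[OF _ B ut1 ut], auto simp: A1id)
  from A1id have diagA1: "diag_mat A1 = [e]" unfolding diag_mat_def by auto
  from diag_four_block_mat[OF A1 B] have diag: "diag_mat C = e # es" unfolding diag diagA1 C_def by simp
  from ut similar_mat_wit_trans[OF simAA' simA'C] diag
  show ?case by blast
qed



lemma rank_aux:
  fixes P Q :: "'a::comm_ring_1 mat"
  assumes P: "P \<in> carrier_mat n n" and Q: "Q \<in> carrier_mat n n" and QP: "Q * P = 1\<^sub>m n"
    and kk: "k < k'" "k' \<le> n"
    and Z: "\<And>i j. k \<le> i \<Longrightarrow> i < n \<Longrightarrow> j < k' \<Longrightarrow> P $$ (i,j) = 0"
  shows "(1::'a) = 0"
proof -
  define X where "X = mat k' k' (\<lambda>(i,j). P $$ (i,j))"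
  define Y where "Y = mat k' k' (\<lambda>(i,j). Q $$ (i,j))"
  have X: "X \<in> carrier_mat k' k'" and Y: "Y \<in> carrier_mat k' k'" unfolding X_def Y_def by auto
  have "Y * X = 1\<^sub>m k'"
  proof (rule eq_matI)
    fix i j assume i: "i < dim_row (1\<^sub>m k')" and j: "j < dim_col (1\<^sub>m k')"
    hence ij: "i < k'" "j < k'" by auto
    have "(Y * X) $$ (i,j) = (\<Sum>l<k'. Q $$ (i,l) * P $$ (l,j))"
      using ij X Y by (simp add: X_def Y_def scalar_prod_def atLeast0LessThan)
    also have "\<dots> = (\<Sum>l<n. Q $$ (i,l) * P $$ (l,j))"
    proof (rule sum.mono_neutral_left)
      show "\<forall>l\<in>{..<n} - {..<k'}. Q $$ (i, l) * P $$ (l, j) = 0" using Z ij kk by auto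
    qed (insert kk, auto)
    also have "\<dots> = (Q * P) $$ (i,j)" using P Q ij kk
      by (simp add: scalar_prod_def atLeast0LessThan)
    also have "\<dots> = 1\<^sub>m k' $$ (i,j)" unfolding QP using ij kk by auto
    finally show "(Y * X) $$ (i,j) = 1\<^sub>m k' $$ (i,j)" .
  qed (insert X Y, auto)
  hence "det Y * det X = 1" using det_mult[OF Y X] by simp
  moreover have "det X = 0"
  proof -
    have "det X = (\<Sum> p \<in> {p. p permutes {0 ..< k'}}. signof p * (\<Prod> i = 0 ..< k'. X $$ (i, p i)))"
      using det_def'[OF X] .
    also have "\<dots> = 0"
    proof (rule sum.neutral, intro ballI)
      fix p assume "p \<in> {p. p permutes {0 ..< k'}}"
      hence p: "p permutes {0..<k'}" by auto
      have k'0: "k' - 1 < k'" "k' - 1 \<ge> k" using kk by auto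
      have "p (k' - 1) < k'" using permutes_in_image[OF p] k'0 by auto
      hence "X $$ (k' - 1, p (k' - 1)) = 0" unfolding X_def using k'0 Z kk by auto
      hence "(\<Prod> i = 0 ..< k'. X $$ (i, p i)) = 0"
        using k'0 by (intro prod_zero bexI[of _ "k' - 1"], auto)
      thus "signof p * (\<Prod> i = 0 ..< k'. X $$ (i, p i)) = 0" by simp
    qed
    finally show ?thesis .
  qed
  ultimately show ?thesis by simp
qed



lemma vanish:
  fixes P :: "'a::comm_ring_1 mat" and U U' :: "'k::field mat" and emb :: "'k \<Rightarrow> 'a"
  assumes U: "U \<in> carrier_mat n n" and U': "U' \<in> carrier_mat n n"
    and utU: "upper_triangular U" and utU': "upper_triangular U'"
    and eq: "\<And>i j. i < n \<Longrightarrow> j < n \<Longrightarrow>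
       d (P $$ (i,j)) = (\<Sum>l<n. P $$ (i,l) * emb (U' $$ (l,j))) - (\<Sum>l<n. emb (U $$ (i,l)) * P $$ (l,j))"
    and inj: "\<And>x f. x \<notin> \<int> \<Longrightarrow> d f + emb x * f = 0 \<Longrightarrow> f = 0"
    and embdiff: "\<And>x y. emb (x - y) = emb x - emb y"
    and sep: "\<And>i j. k \<le> i \<Longrightarrow> i < n \<Longrightarrow> j < k' \<Longrightarrow> U $$ (i,i) - U' $$ (j,j) \<notin> \<int>"
    and k': "k' \<le> n"
  shows "\<And>i j. k \<le> i \<Longrightarrow> i < n \<Longrightarrow> j < k' \<Longrightarrow> P $$ (i,j) = 0"
proof -
  have main: "\<forall>i j. k \<le> i \<longrightarrow> i < n \<longrightarrow> j < k' \<longrightarrow> j + (n - i) = s \<longrightarrow> P $$ (i,j) = 0" for s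
  proof (induct s rule: less_induct)
    case (less s)
    show ?case
    proof (intro allI impI)
      fix i j assume ki: "k \<le> i" and i: "i < n" and j: "j < k'" and s: "j + (n - i) = s"
      have jn: "j < n" using j k' by auto
      have IH: "P $$ (i', j') = 0" if "k \<le> i'" "i' < n" "j' < k'" "j' + (n - i') < s" for i' j'
        using less that by blast
      have s1: "(\<Sum>l<n. P $$ (i,l) * emb (U' $$ (l,j))) = P $$ (i,j) * emb (U' $$ (j,j))"
      proof -
        have "(\<Sum>l<n. P $$ (i,l) * emb (U' $$ (l,j))) = P $$ (i,j) * emb (U' $$ (j,j)) +
           (\<Sum>l\<in>{..<n} - {j}. P $$ (i,l) * emb (U' $$ (l,j)))"
          using jn by (subst sum.remove[of _ j], auto)
        also have "(\<Sum>l\<in>{..<n} - {j}. P $$ (i,l) * emb (U' $$ (l,j))) = 0"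
        proof (rule sum.neutral, intro ballI)
          fix l assume l: "l \<in> {..<n} - {j}"
          show "P $$ (i,l) * emb (U' $$ (l,j)) = 0"
          proof (cases "l < j")
            case True
            hence "P $$ (i,l) = 0" using IH[of i l] ki i j s by auto
            thus ?thesis by simp
          next
            case False
            hence "j < l" using l by auto
            hence "U' $$ (l,j) = 0" using utU' U' l unfolding upper_triangular_def by auto
            moreover have "emb 0 = 0" using embdiff[of 0 0] by simp
            ultimately show ?thesis by simp
          qed
        qed
        finally show ?thesis by simp
      qed
      have s2: "(\<Sum>l<n. emb (U $$ (i,l)) * P $$ (l,j)) = emb (U $$ (i,i)) * P $$ (i,j)"
      proof -
        have "(\<Sum>l<n. emb (U $$ (i,l)) * P $$ (l,j)) = emb (U $$ (i,i)) * P $$ (i,j) +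
           (\<Sum>l\<in>{..<n} - {i}. emb (U $$ (i,l)) * P $$ (l,j))"
          using i by (subst sum.remove[of _ i], auto)
        also have "(\<Sum>l\<in>{..<n} - {i}. emb (U $$ (i,l)) * P $$ (l,j)) = 0"
        proof (rule sum.neutral, intro ballI)
          fix l assume l: "l \<in> {..<n} - {i}"
          show "emb (U $$ (i,l)) * P $$ (l,j) = 0"
          proof (cases "i < l")
            case True
            hence "P $$ (l,j) = 0" using IH[of l j] ki i j s l by auto
            thus ?thesis by simp
          next
            case False
            hence "l < i" using l by auto
            hence "U $$ (i,l) = 0" using utU U i unfolding upper_triangular_def by auto
            moreover have "emb 0 = 0" using embdiff[of 0 0] by simp
            ultimately show ?thesis by simp
          qed
        qed
        finally show ?thesis by simp
      qed
      have "d (P $$ (i,j)) + emb (U $$ (i,i) - U' $$ (j,j)) * P $$ (i,j) = 0"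
        unfolding eq[OF i jn] s1 s2 embdiff by (simp add: algebra_simps)
      from inj[OF sep[OF ki i j] this] show "P $$ (i,j) = 0" .
    qed
  qed
  fix i j assume "k \<le> i" "i < n" "j < k'"
  thus "P $$ (i,j) = 0" using main by blast
qed



lemma tpow_inv: assumes "t * ti = (1::'a::comm_ring_1)"
  shows "tpow t ti (- z) * tpow t ti z = 1"
proof (cases "z \<ge> 0")
  case True
  have "ti ^ nat z * t ^ nat z = (t * ti) ^ nat z" by (simp add: power_mult_distrib mult.commute)
  thus ?thesis using True assms by (cases "z = 0", auto simp: tpow_def)
next
  case False
  have "t ^ nat (-z) * ti ^ nat (-z) = (t * ti) ^ nat (-z)" by (simp add: power_mult_distrib)
  thus ?thesis using False assms by (auto simp: tpow_def)
qed

lemma tpow_0[simp]: "tpow t ti 0 = 1" by (simp add: tpow_def)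

lemma emb_hom: assumes "diff_K_algebra emb t ti d" shows "comm_ring_hom emb"
proof -
  from assms have a: "\<And>x y. emb (x + y) = emb x + emb y" and m: "\<And>x y. emb (x * y) = emb x * emb y"
    and o: "emb 1 = 1" unfolding diff_K_algebra_def by auto
  have z: "emb 0 = 0" using a[of 0 0] by simp
  show ?thesis by (unfold_locales, auto simp: a m o z)
qed

lemma d_facts: assumes "diff_K_algebra emb t ti d"
  shows "d 0 = 0" "\<And>x y. d (x + y) = d x + d y" "\<And>x y. d (x - y) = d x - d y"
    "\<And>x y. d (x * y) = d x * y + x * d y" "\<And>c. d (emb c) = 0"
    "\<And>c y. d (emb c * y) = emb c * d y"
    "\<And>z. d (tpow t ti z) = of_int z * tpow t ti z"
    "\<And>F f. d (sum f F) = (\<Sum>x\<in>F. d (f x))"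
proof -
  from assms have a: "\<And>x y. d (x + y) = d x + d y" and m: "\<And>x y. d (x * y) = d x * y + x * d y"
    and dt: "\<And>c z. d (emb c * tpow t ti z) = of_int z * (emb c * tpow t ti z)"
    and o: "emb 1 = 1" unfolding diff_K_algebra_def by auto
  show z: "d 0 = 0" using a[of 0 0] by simp
  show "\<And>x y. d (x + y) = d x + d y" by fact
  show "\<And>x y. d (x - y) = d x - d y"
  proof -
    fix x y
    have "d (x - y) + d y = d x" using a[of "x - y" y] by simp
    thus "d (x - y) = d x - d y" by (simp add: algebra_simps)
  qed
  show "\<And>x y. d (x * y) = d x * y + x * d y" by fact
  show c: "\<And>c. d (emb c) = 0" using dt[of _ 0] by simp
  show "\<And>c y. d (emb c * y) = emb c * d y" using m c by simp
  show "\<And>z. d (tpow t ti z) = of_int z * tpow t ti z" using dt[of 1] o by simp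
  interpret additive d by (unfold_locales, rule a)
  show "\<And>F f. d (sum f F) = (\<Sum>x\<in>F. d (f x))" by (rule sum)
qed

lemma inj_lemma:
  assumes reps: "reps R" and A: "diff_K_algebra emb t ti d" and noexp: "no_exp_log emb d R"
    and x: "x \<notin> \<int>" and eq: "d f + emb x * f = 0"
  shows "f = 0"
proof -
  interpret comm_ring_hom emb by (rule emb_hom[OF A])
  note df = d_facts[OF A]
  from reps obtain r where r: "r \<in> R" "x - r \<in> \<int>" unfolding reps_def by blast
  then obtain m where m: "x - r = of_int m" by (auto elim: Ints_cases)
  have r0: "r \<noteq> 0" using x r by auto
  have tt: "t * ti = 1" using A unfolding diff_K_algebra_def by auto
  define g where "g = tpow t ti m * f"
  have ex: "emb x = emb r + of_int m"
  proof -
    have "x = r + of_int m" using m by (simp add: algebra_simps)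
    hence "emb x = emb r + emb (of_int m)" by (simp add: hom_add)
    thus ?thesis by (simp add: hom_of_int)
  qed
  have df': "d f = - (emb x * f)" using eq by (simp add: eq_neg_iff_add_eq_0)
  have "d g = of_int m * tpow t ti m * f + tpow t ti m * (- (emb x * f))"
    unfolding g_def df(4) df(7) df' by (simp only:)
  also have "\<dots> = - (emb r * g)" unfolding ex g_def by (simp add: algebra_simps)
  finally have "d g + emb r * g = 0" by simp
  from noexp have ne: "\<forall>a \<in> R - {0}. \<forall>f. d f + emb a * f = 0 \<longrightarrow> f = 0"
    unfolding no_exp_log_def by (rule conjunct2)
  have g0: "g = 0" using ne r r0 \<open>d g + emb r * g = 0\<close> by blast
  have "f = tpow t ti (- m) * g" unfolding g_def using tpow_inv[OF tt, of m]
    by (simp add: mult.assoc[symmetric])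
  thus ?thesis using g0 by simp
qed



lemma resum:
  assumes M: "Modules.module scale"
  shows "(\<Sum>i<n. scale (c i) (\<Sum>l<n. scale (a l i) (b l))) = (\<Sum>l<n. scale (\<Sum>i<n. c i * a l i) (b l))"
proof -
  interpret Modules.module scale by (rule M)
  have "(\<Sum>i<n. scale (c i) (\<Sum>l<n. scale (a l i) (b l))) = (\<Sum>i<n. \<Sum>l<n. scale (c i * a l i) (b l))"
    by (simp add: scale_sum_right)
  also have "\<dots> = (\<Sum>l<n. \<Sum>i<n. scale (c i * a l i) (b l))" by (rule sum.swap)
  also have "\<dots> = (\<Sum>l<n. scale (\<Sum>i<n. c i * a l i) (b l))" by (simp add: scale_sum_left)
  finally show ?thesis .
qed

lemma basis_unique:
  assumes M: "Modules.module scale" and b: "is_basis scale n b"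
    and eq: "(\<Sum>i<n. scale (f i) (b i)) = (\<Sum>i<n. scale (g i) (b i))" and i: "i < n"
  shows "f i = g i"
proof -
  define f' where "f' = (\<lambda>i. if i < n then f i else 0)"
  define g' where "g' = (\<lambda>i. if i < n then g i else 0)"
  have f'e: "(\<Sum>i<n. scale (f' i) (b i)) = (\<Sum>i<n. scale (f i) (b i))" unfolding f'_def by simp
  have g'e: "(\<Sum>i<n. scale (g' i) (b i)) = (\<Sum>i<n. scale (g i) (b i))" unfolding g'_def by simp
  from b have "\<exists>!h. (\<forall>i. n \<le> i \<longrightarrow> h i = 0) \<and> (\<Sum>i<n. scale (f i) (b i)) = (\<Sum>i<n. scale (h i) (b i))"
    unfolding is_basis_def by blast
  moreover have "(\<forall>i. n \<le> i \<longrightarrow> f' i = 0) \<and> (\<Sum>i<n. scale (f i) (b i)) = (\<Sum>i<n. scale (f' i) (b i))"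
    using f'e by (auto simp: f'_def)
  moreover have "(\<forall>i. n \<le> i \<longrightarrow> g' i = 0) \<and> (\<Sum>i<n. scale (f i) (b i)) = (\<Sum>i<n. scale (g' i) (b i))"
    using g'e eq by (auto simp: g'_def)
  ultimately have "f' = g'" by blast
  thus ?thesis using i unfolding f'_def g'_def by metis
qed

lemma basis_delta:
  assumes M: "Modules.module scale" and j: "(j::nat) < n"
  shows "(\<Sum>l<n. scale (if l = j then 1 else 0) (b l)) = b j"
proof -
  interpret Modules.module scale by (rule M)
  have "(\<Sum>l<n. scale (if l = j then 1 else 0) (b l)) = (\<Sum>l<n. if l = j then b l else 0)"
    by (rule sum.cong, auto)
  also have "\<dots> = b j" using j by simp
  finally show ?thesis .
qed

lemma change_basis:
  fixes scale :: "'a::comm_ring_1 \<Rightarrow> 'm::ab_group_add \<Rightarrow> 'm"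
  assumes M: "diff_module d scale nabla"
    and b: "is_basis scale n b" and b': "is_basis scale n b'"
    and Gb: "is_conn_matrix nabla scale n b g"
    and Gb': "is_conn_matrix nabla scale n b' g'"
  shows "\<exists>p q. (\<forall>l<n. \<forall>j<n. (\<Sum>i<n. p l i * q i j) = (if l = j then 1 else 0)) \<and>
               (\<forall>l<n. \<forall>j<n. (\<Sum>i<n. q l i * p i j) = (if l = j then 1 else 0)) \<and>
               (\<forall>l<n. \<forall>j<n. d (p l j) + (\<Sum>i<n. g l i * p i j) = (\<Sum>i<n. p l i * g' i j))"
proof -
  have Mo: "Modules.module scale" using M unfolding diff_module_def by auto
  interpret Modules.module scale by (rule Mo)
  have nadd: "\<And>x y. nabla (x + y) = nabla x + nabla y" and nsc: "\<And>f x. nabla (scale f x) = scale (d f) x + scale f (nabla x)"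
    using M unfolding diff_module_def by auto
  interpret nab: additive nabla by (unfold_locales, rule nadd)
  have ex1: "\<exists>f. b' j = (\<Sum>i<n. scale (f i) (b i))" for j
  proof -
    from b have "\<exists>!f. (\<forall>i. n \<le> i \<longrightarrow> f i = 0) \<and> b' j = (\<Sum>i<n. scale (f i) (b i))"
      unfolding is_basis_def by (rule spec)
    thus ?thesis by blast
  qed
  have ex2: "\<exists>f. b j = (\<Sum>i<n. scale (f i) (b' i))" for j
  proof -
    from b' have "\<exists>!f. (\<forall>i. n \<le> i \<longrightarrow> f i = 0) \<and> b j = (\<Sum>i<n. scale (f i) (b' i))"
      unfolding is_basis_def by (rule spec)
    thus ?thesis by blast
  qed
  define pp where "pp j = (SOME f. b' j = (\<Sum>i<n. scale (f i) (b i)))" for j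
  define qq where "qq j = (SOME f. b j = (\<Sum>i<n. scale (f i) (b' i)))" for j
  have pp: "\<And>j. b' j = (\<Sum>i<n. scale (pp j i) (b i))" unfolding pp_def by (rule someI_ex[OF ex1])
  have qq: "\<And>j. b j = (\<Sum>i<n. scale (qq j i) (b' i))" unfolding qq_def by (rule someI_ex[OF ex2])
  define p where "p = (\<lambda>i j. pp j i)"
  define q where "q = (\<lambda>i j. qq j i)"
  have pb: "\<And>j. b' j = (\<Sum>i<n. scale (p i j) (b i))" unfolding p_def by (rule pp)
  have qb: "\<And>j. b j = (\<Sum>i<n. scale (q i j) (b' i))" unfolding q_def by (rule qq)
  have PQ: "\<forall>l<n. \<forall>j<n. (\<Sum>i<n. p l i * q i j) = (if l = j then 1 else 0)"
  proof (intro allI impI)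
    fix l j assume l: "l < n" and j: "j < n"
    have "(\<Sum>l<n. scale (if l = j then 1 else 0) (b l)) = b j" by (rule basis_delta[OF Mo j])
    also have "\<dots> = (\<Sum>i<n. scale (q i j) (b' i))" by (rule qb)
    also have "\<dots> = (\<Sum>i<n. scale (q i j) (\<Sum>l<n. scale (p l i) (b l)))" by (simp only: pb)
    also have "\<dots> = (\<Sum>l<n. scale (\<Sum>i<n. q i j * p l i) (b l))" by (rule resum[OF Mo])
    finally have "(if l = j then 1 else 0) = (\<Sum>i<n. q i j * p l i)" by (rule basis_unique[OF Mo b _ l])
    thus "(\<Sum>i<n. p l i * q i j) = (if l = j then 1 else 0)" by (simp add: mult.commute)
  qed
  have QP: "\<forall>l<n. \<forall>j<n. (\<Sum>i<n. q l i * p i j) = (if l = j then 1 else 0)"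
  proof (intro allI impI)
    fix l j assume l: "l < n" and j: "j < n"
    have "(\<Sum>l<n. scale (if l = j then 1 else 0) (b' l)) = b' j" by (rule basis_delta[OF Mo j])
    also have "\<dots> = (\<Sum>i<n. scale (p i j) (b i))" by (rule pb)
    also have "\<dots> = (\<Sum>i<n. scale (p i j) (\<Sum>l<n. scale (q l i) (b' l)))" by (simp only: qb)
    also have "\<dots> = (\<Sum>l<n. scale (\<Sum>i<n. p i j * q l i) (b' l))" by (rule resum[OF Mo])
    finally have "(if l = j then 1 else 0) = (\<Sum>i<n. p i j * q l i)" by (rule basis_unique[OF Mo b' _ l])
    thus "(\<Sum>i<n. q l i * p i j) = (if l = j then 1 else 0)" by (simp add: mult.commute)
  qed
  have D: "\<forall>l<n. \<forall>j<n. d (p l j) + (\<Sum>i<n. g l i * p i j) = (\<Sum>i<n. p l i * g' i j)"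
  proof (intro allI impI)
    fix l j assume l: "l < n" and j: "j < n"
    have "nabla (b' j) = (\<Sum>i<n. nabla (scale (p i j) (b i)))" unfolding pb by (rule nab.sum)
    also have "\<dots> = (\<Sum>i<n. scale (d (p i j)) (b i)) + (\<Sum>i<n. scale (p i j) (nabla (b i)))"
      unfolding nsc by (simp add: sum.distrib)
    also have "(\<Sum>i<n. scale (p i j) (nabla (b i))) = (\<Sum>i<n. scale (p i j) (\<Sum>l<n. scale (g l i) (b l)))"
      using Gb unfolding is_conn_matrix_def by (intro sum.cong, auto)
    also have "\<dots> = (\<Sum>l<n. scale (\<Sum>i<n. p i j * g l i) (b l))" by (rule resum[OF Mo])
    also have "(\<Sum>i<n. scale (d (p i j)) (b i)) + \<dots> = (\<Sum>l<n. scale (d (p l j) + (\<Sum>i<n. p i j * g l i)) (b l))"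
      by (simp add: sum.distrib scale_left_distrib)
    finally have e1: "nabla (b' j) = (\<Sum>l<n. scale (d (p l j) + (\<Sum>i<n. p i j * g l i)) (b l))" .
    have "nabla (b' j) = (\<Sum>i<n. scale (g' i j) (b' i))" using Gb' j unfolding is_conn_matrix_def by auto
    also have "\<dots> = (\<Sum>i<n. scale (g' i j) (\<Sum>l<n. scale (p l i) (b l)))" unfolding pb ..
    also have "\<dots> = (\<Sum>l<n. scale (\<Sum>i<n. g' i j * p l i) (b l))" by (rule resum[OF Mo])
    finally have "(\<Sum>l<n. scale (d (p l j) + (\<Sum>i<n. p i j * g l i)) (b l)) = (\<Sum>l<n. scale (\<Sum>i<n. g' i j * p l i) (b l))"
      using e1 by simp
    from basis_unique[OF Mo b this l]
    show "d (p l j) + (\<Sum>i<n. g l i * p i j) = (\<Sum>i<n. p l i * g' i j)" by (simp add: mult.commute)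
  qed
  show ?thesis using PQ QP D by blast
qed



lemma dconst:
  assumes A: "diff_K_algebra emb t ti d" and C: "C0 \<in> carrier_mat n n" and X: "X \<in> carrier_mat n n"
  shows "map_mat d (map_mat emb C0 * X) = map_mat emb C0 * map_mat d X"
    and "map_mat d (X * map_mat emb C0) = map_mat d X * map_mat emb C0"
proof -
  note df = d_facts[OF A]
  show "map_mat d (map_mat emb C0 * X) = map_mat emb C0 * map_mat d X"
    using C X by (intro eq_matI, auto simp: scalar_prod_def df(8) df(6))
  have r: "d (x * emb c) = d x * emb c" for x c using df(6)[of c x] by (simp add: mult.commute)
  show "map_mat d (X * map_mat emb C0) = map_mat d X * map_mat emb C0"
    using C X by (intro eq_matI, auto simp: scalar_prod_def df(8) r)
qed

lemma one_ne_zero_A: fixes emb :: "'k::field_char_0 \<Rightarrow> 'a::comm_ring_1"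
  assumes A: "diff_K_algebra emb t ti d" shows "(1::'a::comm_ring_1) \<noteq> 0"
proof
  assume 10: "(1::'a) = 0"
  from A have li: "\<forall>F (c :: int \<Rightarrow> 'k). finite F \<longrightarrow> (\<Sum>z\<in>F. emb (c z) * tpow t ti z) = 0 \<longrightarrow>
        (\<forall>z\<in>F. c z = 0)" unfolding diff_K_algebra_def by blast
  have o: "emb 1 = 1" using A unfolding diff_K_algebra_def by blast
  have "(\<Sum>z\<in>{0::int}. emb ((\<lambda>_. 1::'k) z) * tpow t ti z) = 0" using 10 o by simp
  from li[rule_format, OF _ this] have "(1::'k) = 0" by simp
  thus False by simp
qed

lemma cm[simp]: "A \<in> carrier_mat n n \<Longrightarrow> B \<in> carrier_mat n n \<Longrightarrow> A * B \<in> carrier_mat n n"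
  by (rule mult_carrier_mat)

lemma half:
  fixes emb :: "'k::field_char_0 \<Rightarrow> 'a::comm_ring_1" and P Q :: "'a mat"
  assumes reps: "reps R" and A: "diff_K_algebra emb t ti d" and noexp: "no_exp_log emb d R"
    and P: "P \<in> carrier_mat n n" and Q: "Q \<in> carrier_mat n n" and QP: "Q * P = 1\<^sub>m n"
    and dP: "map_mat d P + map_mat emb G * P = P * map_mat emb G'"
    and G: "G \<in> carrier_mat n n" and G': "G' \<in> carrier_mat n n"
    and sim: "similar_mat_wit G U S T" and sim': "similar_mat_wit G' U' S' T'"
    and utU: "upper_triangular U" and utU': "upper_triangular U'"
    and sep: "\<And>i j. k \<le> i \<Longrightarrow> i < n \<Longrightarrow> j < k' \<Longrightarrow> U $$ (i,i) - U' $$ (j,j) \<notin> \<int>"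
    and kk: "k < k'" "k' \<le> n"
  shows False
proof -
  interpret comm_ring_hom emb by (rule emb_hom[OF A])
  from similar_mat_witD2[OF G sim] have ST: "S * T = 1\<^sub>m n" and TS: "T * S = 1\<^sub>m n"
    and GU: "G = S * U * T" and U: "U \<in> carrier_mat n n" and S: "S \<in> carrier_mat n n"
    and T: "T \<in> carrier_mat n n" by auto
  from similar_mat_witD2[OF G' sim'] have ST': "S' * T' = 1\<^sub>m n" and TS': "T' * S' = 1\<^sub>m n"
    and GU': "G' = S' * U' * T'" and U': "U' \<in> carrier_mat n n" and S': "S' \<in> carrier_mat n n"
    and T': "T' \<in> carrier_mat n n" by auto
  define SA where "SA = map_mat emb S"
  define TA where "TA = map_mat emb T"
  define UA where "UA = map_mat emb U"
  define SA' where "SA' = map_mat emb S'"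
  define TA' where "TA' = map_mat emb T'"
  define UA' where "UA' = map_mat emb U'"
  define GA where "GA = map_mat emb G"
  define GA' where "GA' = map_mat emb G'"
  define DP where "DP = map_mat d P"
  have car[simp]: "SA \<in> carrier_mat n n" "TA \<in> carrier_mat n n" "UA \<in> carrier_mat n n"
    "SA' \<in> carrier_mat n n" "TA' \<in> carrier_mat n n" "UA' \<in> carrier_mat n n"
    "GA \<in> carrier_mat n n" "GA' \<in> carrier_mat n n" "DP \<in> carrier_mat n n"
    using S T U S' T' U' G G' P
    by (auto simp: SA_def TA_def UA_def SA'_def TA'_def UA'_def GA_def GA'_def DP_def)
  have TSA: "TA * SA = 1\<^sub>m n" unfolding TA_def SA_def mat_hom_mult[OF T S, symmetric] TS mat_hom_one ..
  have STA: "SA * TA = 1\<^sub>m n" unfolding TA_def SA_def mat_hom_mult[OF S T, symmetric] ST mat_hom_one ..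
  have TSA': "TA' * SA' = 1\<^sub>m n" unfolding TA'_def SA'_def mat_hom_mult[OF T' S', symmetric] TS' mat_hom_one ..
  have GUA: "GA = SA * UA * TA" unfolding GA_def SA_def UA_def TA_def GU
    mat_hom_mult[OF mult_carrier_mat[OF S U] T] mat_hom_mult[OF S U] ..
  have GUA': "GA' = SA' * UA' * TA'" unfolding GA'_def SA'_def UA'_def TA'_def GU'
    mat_hom_mult[OF mult_carrier_mat[OF S' U'] T'] mat_hom_mult[OF S' U'] ..
  have "TA * GA = (TA * SA) * (UA * TA)" unfolding GUA
    by (simp add: assoc_mult_mat[of _ n n _ n _ n])
  hence TG: "TA * GA = UA * TA" unfolding TSA using left_mult_one_mat[OF cm[OF car(3) car(2)]] by simp
  have "GA' * SA' = (SA' * UA') * (TA' * SA')" unfolding GUA'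
    by (simp add: assoc_mult_mat[of _ n n _ n _ n])
  hence GS': "GA' * SA' = SA' * UA'" unfolding TSA' using right_mult_one_mat[OF cm[OF car(4) car(6)]] by simp
  define Pt where "Pt = TA * P * SA'"
  define X where "X = TA' * Q * SA"
  have Pt: "Pt \<in> carrier_mat n n" and X: "X \<in> carrier_mat n n" unfolding Pt_def X_def using P Q by auto
  have XP: "X * Pt = 1\<^sub>m n"
  proof -
    have "X * Pt = TA' * (Q * ((SA * TA) * (P * SA')))" unfolding X_def Pt_def using P Q
      by (simp add: assoc_mult_mat[of _ n n _ n _ n])
    also have "\<dots> = TA' * ((Q * P) * SA')" unfolding STA using P Q
      by (simp add: assoc_mult_mat[of _ n n _ n _ n] left_mult_one_mat[OF cm[OF P car(4)]])
    also have "\<dots> = 1\<^sub>m n" unfolding QP left_mult_one_mat[OF car(4)] TSA' ..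
    finally show ?thesis .
  qed
  have dPt: "map_mat d Pt = TA * DP * SA'"
  proof -
    have TP: "TA * P \<in> carrier_mat n n" using P by simp
    have "map_mat d Pt = map_mat d (TA * P) * SA'"
      unfolding Pt_def SA'_def by (rule dconst(2)[OF A S' TP])
    also have "map_mat d (TA * P) = TA * DP" unfolding TA_def DP_def by (rule dconst(1)[OF A T P])
    finally show ?thesis .
  qed
  have dP': "DP + GA * P = P * GA'" using dP unfolding DP_def GA_def GA'_def .
  have eqPt: "map_mat d Pt + UA * Pt = Pt * UA'"
  proof -
    have "map_mat d Pt + UA * Pt = TA * DP * SA' + (UA * TA) * P * SA'"
      using dPt P unfolding Pt_def by (simp add: assoc_mult_mat[of _ n n _ n _ n])
    also have "\<dots> = TA * DP * SA' + TA * GA * P * SA'" unfolding TG ..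
    also have "\<dots> = TA * (DP + GA * P) * SA'" using P
      unfolding mult_add_distrib_mat[OF car(2) car(9) cm[OF car(7) P]]
        add_mult_distrib_mat[OF cm[OF car(2) car(9)] cm[OF car(2) cm[OF car(7) P]] car(4)]
      by (simp add: assoc_mult_mat[of _ n n _ n _ n])
    also have "\<dots> = TA * P * (GA' * SA')" unfolding dP' using P
      by (simp add: assoc_mult_mat[of _ n n _ n _ n])
    also have "\<dots> = Pt * UA'" unfolding GS' Pt_def using P
      by (simp add: assoc_mult_mat[of _ n n _ n _ n])
    finally show ?thesis .
  qed
  have entry: "d (Pt $$ (i,j)) = (\<Sum>l<n. Pt $$ (i,l) * emb (U' $$ (l,j))) - (\<Sum>l<n. emb (U $$ (i,l)) * Pt $$ (l,j))"
    if i: "i < n" and j: "j < n" for i j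
  proof -
    from arg_cong[OF eqPt, of "\<lambda>M. M $$ (i,j)"] i j Pt U U'
    have "d (Pt $$ (i,j)) + (\<Sum>l<n. emb (U $$ (i,l)) * Pt $$ (l,j)) = (\<Sum>l<n. Pt $$ (i,l) * emb (U' $$ (l,j)))"
      by (simp add: UA_def UA'_def scalar_prod_def atLeast0LessThan)
    thus ?thesis by (simp add: algebra_simps)
  qed
  have inj: "\<And>x f. x \<notin> \<int> \<Longrightarrow> d f + emb x * f = 0 \<Longrightarrow> f = 0"
    using inj_lemma[OF reps A noexp] by blast
  have Z: "\<And>i j. k \<le> i \<Longrightarrow> i < n \<Longrightarrow> j < k' \<Longrightarrow> Pt $$ (i,j) = 0"
    by (rule vanish[OF U U' utU utU' entry inj hom_minus sep kk(2)], auto)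
  from rank_aux[OF Pt X XP kk Z] one_ne_zero_A[OF A] show False by simp
qed



lemma split_poly:
  fixes p :: "'k::field poly"
  assumes ac: "\<forall>p :: 'k poly. degree p \<ge> 1 \<longrightarrow> (\<exists>x. poly p x = 0)"
  shows "monic p \<Longrightarrow> \<exists>es. p = (\<Prod>e\<leftarrow>es. [:-e,1:])"
proof (induct "degree p" arbitrary: p rule: less_induct)
  case (less p)
  show ?case
  proof (cases "degree p = 0")
    case True
    hence "p = 1" using monic_degree_0[OF less(2)] by simp
    hence "p = (\<Prod>e\<leftarrow>[]. [:-e,1:])" by simp
    thus ?thesis by blast
  next
    case False
    hence "degree p \<ge> 1" by simp
    with ac obtain x where "poly p x = 0" by blast
    hence "[:-x,1:] dvd p" by (simp add: poly_eq_0_iff_dvd)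
    then obtain q where pq: "p = [:-x,1:] * q" by (auto elim: dvdE)
    have p0: "p \<noteq> 0" using less(2) by auto
    hence q0: "q \<noteq> 0" using pq by auto
    have deg: "degree p = Suc (degree q)" unfolding pq using q0 by (subst degree_mult_eq, auto)
    have "lead_coeff p = lead_coeff [:-x,1:] * lead_coeff q" unfolding pq by (rule lead_coeff_mult)
    hence "lead_coeff p = lead_coeff q" by simp
    hence mq: "monic q" using less(2) by simp
    from less(1)[OF _ mq] deg obtain es where "q = (\<Prod>e\<leftarrow>es. [:-e,1:])" by auto
    hence "p = (\<Prod>e\<leftarrow>x # es. [:-e,1:])" unfolding pq by simp
    thus ?thesis by blast
  qed
qed

lemma proots_prod_lin: "proots (\<Prod>e\<leftarrow>es. [:-e,1:]) = mset (es :: 'k::field list)"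
proof (induct es)
  case (Cons e es)
  have nz: "(\<Prod>e\<leftarrow>es. [:-e,1:]) \<noteq> 0" by (auto simp: Groups_List.prod_list_zero_iff)
  have eq: "(\<Prod>e\<leftarrow>e # es. [:-e,1:]) = [:-e,1:] * (\<Prod>e\<leftarrow>es. [:-e,1:])" by simp
  have "proots ([:-e,1:] * (\<Prod>e\<leftarrow>es. [:-e,1:])) = proots [:-e,1:] + proots (\<Prod>e\<leftarrow>es. [:-e,1:])"
    by (rule proots_mult, simp, rule nz)
  thus ?case unfolding eq Cons proots_linear_factor by simp
qed simp

lemma count_image_list: "count (image_mset f (mset xs)) c = length (filter (\<lambda>x. f x = c) xs)"
  by (induct xs, auto)

lemma prod_perm: "mset xs = mset ys \<Longrightarrow> (\<Prod>e\<leftarrow>xs. f e) = (\<Prod>e\<leftarrow>ys. (f e :: 'b::comm_monoid_mult))"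
  by (metis mset_map prod_mset_prod_list)

lemma to_mat:
  fixes emb :: "'k::field_char_0 \<Rightarrow> 'a::comm_ring_1"
  assumes G: "G \<in> carrier_mat n n" and G': "G' \<in> carrier_mat n n"
    and QP: "\<forall>l<n. \<forall>j<n. (\<Sum>i<n. q l i * p i j) = (if l = j then 1 else 0)"
    and D: "\<forall>l<n. \<forall>j<n. d (p l j) + (\<Sum>i<n. emb (G $$ (l,i)) * p i j) = (\<Sum>i<n. p l i * emb (G' $$ (i,j)))"
  shows "mat n n (\<lambda>(i,j). q i j) * mat n n (\<lambda>(i,j). p i j) = 1\<^sub>m n"
    "map_mat d (mat n n (\<lambda>(i,j). p i j)) + map_mat emb G * mat n n (\<lambda>(i,j). p i j)
       = mat n n (\<lambda>(i,j). p i j) * map_mat emb G'"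
  using QP D G G' by (auto intro!: eq_matI simp: scalar_prod_def atLeast0LessThan)

lemma sep_lemma:
  assumes "{y. a - y \<in> \<int>} = c" and "{y. b - y \<in> \<int>} \<noteq> c"
  shows "b - (a :: 'k::field_char_0) \<notin> \<int>"
proof
  assume ba: "b - a \<in> \<int>"
  have "{y. b - y \<in> \<int>} = {y. a - y \<in> \<int>}"
  proof (intro Collect_cong iffI)
    fix y assume "b - y \<in> \<int>"
    hence "(b - y) - (b - a) \<in> \<int>" using ba by (rule Ints_diff)
    thus "a - y \<in> \<int>" by simp
  next
    fix y assume "a - y \<in> \<int>"
    hence "(a - y) + (b - a) \<in> \<int>" using ba by (rule Ints_add)
    thus "b - y \<in> \<int>" by simp
  qed
  thus False using assms by simp
qed

lemma tri_class:
  fixes G :: "'k::field_char_0 mat"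
  assumes ac: "\<forall>p :: 'k poly. degree p \<ge> 1 \<longrightarrow> (\<exists>x. poly p x = 0)"
    and G: "G \<in> carrier_mat n n"
  shows "\<exists>U S T k. similar_mat_wit G U S T \<and> upper_triangular U \<and> k \<le> n \<and>
     count (exps_mod_Z G) c = k \<and>
     (\<forall>i<k. {y. U $$ (i,i) - y \<in> \<int>} = c) \<and> (\<forall>i. k \<le> i \<longrightarrow> i < n \<longrightarrow> {y. U $$ (i,i) - y \<in> \<int>} \<noteq> c)"
proof -
  define C where "C = (\<lambda>x::'k. {y. x - y \<in> \<int>} = c)"
  have "monic (char_poly G)" using degree_monic_char_poly[OF G] by simp
  from split_poly[OF ac this] obtain es where es: "char_poly G = (\<Prod>e\<leftarrow>es. [:-e,1:])" by auto
  define L where "L = filter C es @ filter (\<lambda>x. \<not> C x) es"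
  have "mset L = mset es" unfolding L_def by simp
  hence "char_poly G = (\<Prod>e\<leftarrow>L. [:-e,1:])" unfolding es by (rule prod_perm[symmetric])
  from triangularize[OF G this] obtain U S T where sim: "similar_mat_wit G U S T"
    and ut: "upper_triangular U" and diag: "diag_mat U = L" by auto
  from similar_mat_witD2[OF G sim] have U: "U \<in> carrier_mat n n" by auto
  define k where "k = length (filter C es)"
  have lenL: "length L = n" using diag U unfolding diag_mat_def by auto
  have kn: "k \<le> n" using lenL unfolding L_def k_def by simp
  have Uii: "U $$ (i,i) = L ! i" if "i < n" for i
    using diag U that unfolding diag_mat_def by auto
  have cnt: "count (exps_mod_Z G) c = k"
    unfolding exps_mod_Z_def es proots_prod_lin count_image_list k_def C_def ..
  have in1: "C (U $$ (i,i))" if "i < k" for i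
  proof -
    have "U $$ (i,i) = filter C es ! i" using that kn Uii[of i] unfolding L_def k_def
      by (simp add: nth_append)
    also have "\<dots> \<in> set (filter C es)" using that unfolding k_def by (rule nth_mem)
    finally show ?thesis by simp
  qed
  have in2: "\<not> C (U $$ (i,i))" if "k \<le> i" "i < n" for i
  proof -
    have "U $$ (i,i) = filter (\<lambda>x. \<not> C x) es ! (i - k)" using that Uii[of i] unfolding L_def k_def
      by (simp add: nth_append)
    also have "\<dots> \<in> set (filter (\<lambda>x. \<not> C x) es)" using that lenL unfolding k_def L_def
      by (intro nth_mem, simp)
    finally show ?thesis by simp
  qed
  show ?thesis using sim ut kn cnt in1 in2 unfolding C_def by blast
qed



theorem mainTheorem15:
  fixes emb :: "'k::field_char_0 \<Rightarrow> 'a::comm_ring_1"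
    and t ti :: 'a and d :: "'a \<Rightarrow> 'a" and R :: "'k set"
    and scale :: "'a \<Rightarrow> 'm::ab_group_add \<Rightarrow> 'm" and nabla :: "'m \<Rightarrow> 'm"
    and n :: nat and b b' :: "nat \<Rightarrow> 'm" and G G' :: "'k mat"
  assumes alg_closed: "\<forall>p :: 'k poly. degree p \<ge> 1 \<longrightarrow> (\<exists>x. poly p x = 0)"
    and reps: "reps R"
    and A: "diff_K_algebra emb t ti d"
    and noexp: "no_exp_log emb d R"
    and M: "diff_module d scale nabla"
    and rs: "regular_singular emb t ti d R scale nabla n"
    and b: "is_basis scale n b" and b': "is_basis scale n b'"
    and G: "G \<in> carrier_mat n n" and G': "G' \<in> carrier_mat n n"
    and Gb: "is_conn_matrix nabla scale n b (\<lambda>i j. emb (G $$ (i, j)))"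
    and Gb': "is_conn_matrix nabla scale n b' (\<lambda>i j. emb (G' $$ (i, j)))"
  shows "exps_mod_Z G = exps_mod_Z G'"
proof -
  from change_basis[OF M b b' Gb Gb'] obtain p q where
    QP1: "\<forall>l<n. \<forall>j<n. (\<Sum>i<n. q l i * p i j) = (if l = j then 1 else 0)"
    and D1: "\<forall>l<n. \<forall>j<n. d (p l j) + (\<Sum>i<n. emb (G $$ (l,i)) * p i j) = (\<Sum>i<n. p l i * emb (G' $$ (i,j)))"
    by blast
  from change_basis[OF M b' b Gb' Gb] obtain p2 q2 where
    QP2: "\<forall>l<n. \<forall>j<n. (\<Sum>i<n. q2 l i * p2 i j) = (if l = j then 1 else 0)"
    and D2: "\<forall>l<n. \<forall>j<n. d (p2 l j) + (\<Sum>i<n. emb (G' $$ (l,i)) * p2 i j) = (\<Sum>i<n. p2 l i * emb (G $$ (i,j)))"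
    by blast
  define P1 where "P1 = mat n n (\<lambda>(i,j). p i j)"
  define Q1 where "Q1 = mat n n (\<lambda>(i,j). q i j)"
  define P2 where "P2 = mat n n (\<lambda>(i,j). p2 i j)"
  define Q2 where "Q2 = mat n n (\<lambda>(i,j). q2 i j)"
  have car: "P1 \<in> carrier_mat n n" "Q1 \<in> carrier_mat n n" "P2 \<in> carrier_mat n n" "Q2 \<in> carrier_mat n n"
    unfolding P1_def Q1_def P2_def Q2_def by auto
  note m1 = to_mat[OF G G' QP1 D1, folded P1_def Q1_def]
  note m2 = to_mat[OF G' G QP2 D2, folded P2_def Q2_def]
  show ?thesis
  proof (rule multiset_eqI)
    fix c
    from tri_class[OF alg_closed G, of c] obtain U S T k where
      sim: "similar_mat_wit G U S T" and ut: "upper_triangular U" and kn: "k \<le> n"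
      and cnt: "count (exps_mod_Z G) c = k"
      and in1: "\<And>i. i < k \<Longrightarrow> {y. U $$ (i,i) - y \<in> \<int>} = c"
      and in2: "\<And>i. k \<le> i \<Longrightarrow> i < n \<Longrightarrow> {y. U $$ (i,i) - y \<in> \<int>} \<noteq> c" by blast
    from tri_class[OF alg_closed G', of c] obtain U' S' T' k' where
      sim': "similar_mat_wit G' U' S' T'" and ut': "upper_triangular U'" and kn': "k' \<le> n"
      and cnt': "count (exps_mod_Z G') c = k'"
      and in1': "\<And>i. i < k' \<Longrightarrow> {y. U' $$ (i,i) - y \<in> \<int>} = c"
      and in2': "\<And>i. k' \<le> i \<Longrightarrow> i < n \<Longrightarrow> {y. U' $$ (i,i) - y \<in> \<int>} \<noteq> c" by blast
    have "\<not> k < k'"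
    proof
      assume kk: "k < k'"
      have sep: "\<And>i j. k \<le> i \<Longrightarrow> i < n \<Longrightarrow> j < k' \<Longrightarrow> U $$ (i,i) - U' $$ (j,j) \<notin> \<int>"
        by (rule sep_lemma[OF in1' in2])
      show False
        by (rule half[OF reps A noexp car(1) car(2) m1 G G' sim sim' ut ut' sep kk kn'])
    qed
    moreover have "\<not> k' < k"
    proof
      assume kk: "k' < k"
      have sep: "\<And>i j. k' \<le> i \<Longrightarrow> i < n \<Longrightarrow> j < k \<Longrightarrow> U' $$ (i,i) - U $$ (j,j) \<notin> \<int>"
        by (rule sep_lemma[OF in1 in2'])
      show False
        by (rule half[OF reps A noexp car(3) car(4) m2 G' G sim' sim ut' ut sep kk kn])
    qed
    ultimately show "count (exps_mod_Z G) c = count (exps_mod_Z G') c" using cnt cnt' by simp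
  qed
qed


end
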